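(* Let $G$ be a finite simple graph with maximum degree at most $3$ and let $CG$ be its clawed graph, with $n=|E(CG)|$. Then $M_2(CG)\simeq S^{\frac{2}{3}n-1}$.
   Context: For a graph $G$ of maximum degree at most $3$, the clawed graph $CG$ is obtained by subdividing every edge of $G$ (replacing $\{u,v\}$ by a new vertex $w$ and edges $\{u,w\},\{w,v\}$) and then attaching new leaves (pendant edges to new vertices) to every original vertex $v\in V(G)$ so that every original vertex has degree exactly $3$. A $2$-matching of a graph is a set of edges such that every vertex has degree at most $2$ in it. The $2$-matching complex $M_2(G)$ is the simplicial complex whose vertices are the edges of $G$ and whose faces are the $2$-matchings of $G$. $\simeq$ denotes homotopy equivalence. *)

theory Defs
  imports "HOL-Analysis.Analysis"
begin

definition simple_graph :: "'v set \<Rightarrow> 'v set set \<Rightarrow> bool" where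
  "simple_graph V E \<longleftrightarrow> finite V \<and> (\<forall>e\<in>E. \<exists>u w. u \<noteq> w \<and> e = {u, w} \<and> u \<in> V \<and> w \<in> V)"

definition degree :: "'v set set \<Rightarrow> 'v \<Rightarrow> nat" where
  "degree E v = card {e \<in> E. v \<in> e}"

definition max_degree_le :: "'v set \<Rightarrow> 'v set set \<Rightarrow> nat \<Rightarrow> bool" where
  "max_degree_le V E d \<longleftrightarrow> (\<forall>v\<in>V. degree E v \<le> d)"

text \<open>Clawed graph. Vertices: Inl v (original vertices), Inr (Inl e) (subdivision vertex of
  edge e), Inr (Inr (v,i)) with i < 3 - deg v (new leaves attached to v).\<close>
type_synonym 'v cvert = "'v + ('v set + ('v \<times> nat))"

definition claw_vertices :: "'v set \<Rightarrow> 'v set set \<Rightarrow> 'v cvert set" where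
  "claw_vertices V E = Inl ` V \<union> (Inr \<circ> Inl) ` E
     \<union> {Inr (Inr (v, i)) | v i. v \<in> V \<and> i < 3 - degree E v}"

definition claw_edges :: "'v set \<Rightarrow> 'v set set \<Rightarrow> 'v cvert set set" where
  "claw_edges V E = {{Inl u, Inr (Inl e)} | u e. e \<in> E \<and> u \<in> e}
     \<union> {{Inl v, Inr (Inr (v, i))} | v i. v \<in> V \<and> i < 3 - degree E v}"

definition two_matching :: "'w set set \<Rightarrow> 'w set set \<Rightarrow> bool" where
  "two_matching F M \<longleftrightarrow> M \<subseteq> F \<and> (\<forall>x. card {e \<in> M. x \<in> e} \<le> 2)"

definition two_matching_complex :: "'w set set \<Rightarrow> 'w set set set" where
  "two_matching_complex F = {M. two_matching F M}"

text \<open>Geometric realization of a finite abstract simplicial complex K (a set of faces,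
  each a finite set of vertices of type 'a): the union over faces \<sigma> of the standard simplices
  {x. x \<ge> 0, supp x \<subseteq> \<sigma>, \<Sum> x = 1}, with the subspace topology of the product topology on
  'a \<Rightarrow> real (which agrees with the Euclidean topology on finitely many coordinates).\<close>
definition realization_set :: "'a set set \<Rightarrow> ('a \<Rightarrow> real) set" where
  "realization_set K = (\<Union>\<sigma>\<in>K. {x. (\<forall>i. 0 \<le> x i) \<and> (\<forall>i. i \<notin> \<sigma> \<longrightarrow> x i = 0)
                                   \<and> (\<Sum>i\<in>\<sigma>. x i) = 1})"

definition realization :: "'a set set \<Rightarrow> ('a \<Rightarrow> real) topology" where
  "realization K = subtopology (powertop_real UNIV) (realization_set K)"

end

theory Submission
  imports Defs
begin


lemma sum_double: "(\<Sum>i<2*m. q i) = (\<Sum>j<m. q (2*j) + q (2*j+1::nat)) " for q :: "nat \<Rightarrow> real"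
  by (induction m) (simp_all add: mult_2)

lemma sum3: "(\<Sum>p<3::nat. q p) = q 0 + q 1 + (q 2::real)"
  by (simp add: eval_nat_numeral lessThan_Suc)

lemma min_lemma:
  fixes N a0 a1 a2 :: real
  assumes "N > 0" "a0 \<ge> 0" "a1 \<ge> 0" "a2 \<ge> 0" "a0 = 0 \<or> a1 = 0 \<or> a2 = 0"
  shows "min ((a0 - a2)/N) (min ((a1 - a2)/N) 0) = - a2 / N"
  using assms by (auto simp: min_def divide_simps)

lemma sub_proj [continuous_intros]:
  "continuous_map (subtopology (powertop_real UNIV) S) euclideanreal (\<lambda>x. x a)"
  by (blast intro: continuous_map_from_subtopology [OF continuous_map_product_projection])

lemma block_sphere:
  fixes e :: "nat \<Rightarrow> nat \<Rightarrow> 'a" and blk pos :: "'a \<Rightarrow> nat"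
  assumes m: "m \<ge> 1"
    and inI: "\<And>a. a \<in> I \<Longrightarrow> blk a < m \<and> pos a < 3 \<and> e (blk a) (pos a) = a"
    and inB: "\<And>j p. j < m \<Longrightarrow> p < 3 \<Longrightarrow> e j p \<in> I \<and> blk (e j p) = j \<and> pos (e j p) = p"
  shows "subtopology (powertop_real UNIV)
     {x. (\<forall>i. 0 \<le> x i) \<and> (\<forall>i. i \<notin> I \<longrightarrow> x i = 0) \<and> sum x I = 1 \<and> (\<forall>j<m. \<exists>p<3. x (e j p) = 0)}
     homeomorphic_space nsphere (2*m-1)"
proof -
  define X where "X = {x. (\<forall>i. 0 \<le> x i) \<and> (\<forall>i. i \<notin> I \<longrightarrow> x i = 0) \<and> sum x I = 1 \<and> (\<forall>j<m. \<exists>p<3. x (e j p) = (0::real))}"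
  define Z where "Z = {z::nat\<Rightarrow>real. (\<Sum>i<2*m. z i ^ 2) = 1 \<and> (\<forall>i\<ge>2*m. z i = 0)}"
  have nsph: "nsphere (2*m-1) = subtopology (powertop_real UNIV) Z"
  proof -
    have "{..2*m-1} = {..<2*m}" using m by auto
    moreover have "(i > 2*m-1) = (i \<ge> 2*m)" for i using m by auto
    ultimately show ?thesis unfolding nsphere Z_def by simp
  qed
  have reidx: "sum h I = (\<Sum>j<m. \<Sum>p<3. h (e j p))" for h :: "'a \<Rightarrow> real"
  proof -
    have "sum h I = sum (\<lambda>(j,p). h (e j p)) ({..<m} \<times> {..<3})"
      by (rule sum.reindex_bij_witness[where i="\<lambda>(j,p). e j p" and j="\<lambda>a. (blk a, pos a)"])
         (auto simp: inI inB)
    also have "\<dots> = (\<Sum>j<m. \<Sum>p<3. h (e j p))"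
      by (simp add: sum.cartesian_product)
    finally show ?thesis .
  qed
  define D where "D x i = x (e (i div 2) (i mod 2)) - x (e (i div 2) 2)" for x :: "'a \<Rightarrow> real" and i
  define N where "N x = sqrt (\<Sum>i<2*m. (D x i)^2)" for x
  define f where "f x = (\<lambda>i. if i < 2*m then D x i / N x else 0)" for x
  define Mn where "Mn z j = min (z (2*j)) (min (z (2*j+1)) 0)" for z :: "nat \<Rightarrow> real" and j
  define Y where "Y z j p = (if p < 2 then z (2*j+p) else 0)" for z :: "nat \<Rightarrow> real" and j p :: nat
  define S where "S z = (\<Sum>j<m. \<Sum>p<3. Y z j p - Mn z j)" for z
  define g where "g z = (\<lambda>a. if a \<in> I then (Y z (blk a) (pos a) - Mn z (blk a)) / S z else 0)" for z
  have Npos: "N x > 0" if "x \<in> X" for x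
  proof (rule ccontr)
    assume "\<not> N x > 0"
    moreover have "(\<Sum>i<2*m. (D x i)^2) \<ge> 0" by (simp add: sum_nonneg)
    ultimately have "(\<Sum>i<2*m. (D x i)^2) = 0" unfolding N_def by simp
    hence "\<forall>i\<in>{..<2*m}. (D x i)^2 = 0" by (subst (asm) sum_nonneg_eq_0_iff) auto
    hence D0: "D x i = 0" if "i < 2*m" for i using that by auto
    have "x (e j p) = 0" if "j < m" "p < 3" for j p
    proof -
      have "D x (2*j) = 0" "D x (2*j+1) = 0" using D0 \<open>j<m\<close> by auto
      hence "x (e j 0) = x (e j 2)" "x (e j 1) = x (e j 2)" unfolding D_def by auto
      moreover obtain q where "q < 3" "x (e j q) = 0" using \<open>x\<in>X\<close> \<open>j<m\<close> unfolding X_def by auto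
      ultimately show ?thesis using \<open>p<3\<close> by (auto simp: less_Suc_eq numeral_3_eq_3 numeral_2_eq_2)
    qed
    hence "sum x I = 0" by (simp add: reidx)
    with \<open>x\<in>X\<close> show False unfolding X_def by simp
  qed
  have nn: "Y z j p - Mn z j \<ge> 0" if "p < 3" for z j p using that
    by (auto simp: Y_def Mn_def less_Suc_eq numeral_3_eq_3 numeral_2_eq_2)
  have nn': "Mn z j \<le> Y z j p" if "p < 3" for z j p using nn[OF that] by simp
  have Spos: "S z > 0" if "z \<in> Z" for z
  proof -
    have "S z \<ge> 0" unfolding S_def by (intro sum_nonneg) (use nn in auto)
    moreover have "S z \<noteq> 0"
    proof
      assume "S z = 0"
      hence "\<forall>j\<in>{..<m}. (\<Sum>p<3. Y z j p - Mn z j) = 0" unfolding S_def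
        by (subst (asm) sum_nonneg_eq_0_iff) (auto intro!: sum_nonneg simp: nn')
      hence "\<forall>j\<in>{..<m}. \<forall>p\<in>{..<3}. Y z j p - Mn z j = 0"
        by (subst (asm) sum_nonneg_eq_0_iff) (auto simp: nn')
      hence h: "Y z j p = Mn z j" if "j<m" "p<3" for j p using that by auto
      have "z (2*j) = 0 \<and> z (2*j+1) = 0" if "j < m" for j
      proof -
        have "Mn z j = 0" using h[of j 2] that by (simp add: Y_def)
        thus ?thesis using h[of j 0] h[of j 1] that by (simp add: Y_def)
      qed
      hence "(\<Sum>i<2*m. z i ^ 2) = 0" by (simp add: sum_double)
      with \<open>z\<in>Z\<close> show False unfolding Z_def by simp
    qed
    ultimately show ?thesis by simp
  qed
  have NN: "(N x)^2 = (\<Sum>i<2*m. (D x i)^2)" for x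
    unfolding N_def by (simp add: sum_nonneg)
  have fZ: "f x \<in> Z" if "x \<in> X" for x
  proof -
    have "(\<Sum>i<2*m. f x i ^ 2) = (\<Sum>i<2*m. (D x i)^2) / (N x)^2"
      by (simp add: f_def power_divide sum_divide_distrib)
    also have "\<dots> = 1" using NN[of x] Npos[OF that] by (metis div_self power_not_zero less_irrefl)
    finally show ?thesis unfolding Z_def by (simp add: f_def)
  qed
  have gX: "g z \<in> X" if "z \<in> Z" for z
  proof -
    have S0: "S z > 0" using Spos that .
    have "\<exists>p<3. g z (e j p) = 0" if "j < m" for j
    proof -
      have "Mn z j = Y z j 0 \<or> Mn z j = Y z j 1 \<or> Mn z j = Y z j 2"
        unfolding Y_def Mn_def min_def by simp
      moreover have "(0::nat) < 3" "(1::nat) < 3" "(2::nat) < 3" by simp_all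
      ultimately have "\<exists>p<3. Y z j p = Mn z j" by metis
      then obtain p where "p < 3" "Y z j p = Mn z j" by blast
      thus ?thesis using inB[OF \<open>j<m\<close> \<open>p<3\<close>] by (auto simp: g_def)
    qed
    moreover have "0 \<le> g z a" for a
    proof (cases "a \<in> I")
      case True
      then show ?thesis using nn[of "pos a" z "blk a"] inI[of a] S0 unfolding g_def by simp
    qed (simp add: g_def)
    moreover have "sum (g z) I = 1"
    proof -
      have "sum (g z) I = (\<Sum>j<m. \<Sum>p<3. (Y z j p - Mn z j) / S z)"
        unfolding reidx by (intro sum.cong refl) (simp add: g_def inB)
      also have "\<dots> = S z / S z" by (simp only: S_def sum_divide_distrib)
      finally show ?thesis using S0 by simp
    qed
    moreover have "\<forall>i. i \<notin> I \<longrightarrow> g z i = 0" by (simp add: g_def)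
    ultimately show ?thesis unfolding X_def by blast
  qed
  have gf: "g (f x) = x" if "x \<in> X" for x
  proof
    fix a
    have N0: "N x > 0" using Npos that .
    have key: "Y (f x) j p - Mn (f x) j = x (e j p) / N x" if "j < m" "p < 3" for j p
    proof -
      have z0: "f x (2*j) = (x (e j 0) - x (e j 2)) / N x" using \<open>j<m\<close> by (simp add: f_def D_def)
      have z1: "f x (2*j+1) = (x (e j 1) - x (e j 2)) / N x" using \<open>j<m\<close> by (simp add: f_def D_def)
      obtain q where q: "q < 3" "x (e j q) = 0" using \<open>x\<in>X\<close> \<open>j<m\<close> unfolding X_def by auto
      have dis: "x (e j 0) = 0 \<or> x (e j 1) = 0 \<or> x (e j 2) = 0"
        using q by (auto simp: less_Suc_eq numeral_3_eq_3 numeral_2_eq_2)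
      have "Mn (f x) j = - x (e j 2) / N x"
        unfolding Mn_def z0 z1 by (rule min_lemma) (use N0 \<open>x\<in>X\<close> dis in \<open>auto simp: X_def\<close>)
      moreover have "Y (f x) j p = (x (e j p) - x (e j 2)) / N x"
        using \<open>p<3\<close> z0 z1 by (auto simp: Y_def less_Suc_eq numeral_3_eq_3 numeral_2_eq_2)
      ultimately show ?thesis by (simp add: diff_divide_distrib)
    qed
    have "S (f x) = sum x I / N x"
      unfolding S_def reidx sum_divide_distrib by (intro sum.cong refl) (simp add: key)
    hence S1: "S (f x) = 1 / N x" using \<open>x\<in>X\<close> by (simp add: X_def)
    show "g (f x) a = x a"
    proof (cases "a \<in> I")
      case True
      then show ?thesis using inI[OF True] key[of "blk a" "pos a"] S1 N0 by (simp add: g_def)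
    next
      case False
      then show ?thesis using \<open>x\<in>X\<close> by (simp add: g_def X_def)
    qed
  qed
  have fg: "f (g z) = z" if "z \<in> Z" for z
  proof
    fix i
    have S0: "S z > 0" using Spos that .
    have ge: "g z (e j p) = (Y z j p - Mn z j) / S z" if "j < m" "p < 3" for j p
      using inB[OF that] by (simp add: g_def)
    have Dg: "D (g z) i = z i / S z" if "i < 2*m" for i
    proof -
      have j: "i div 2 < m" using that by auto
      have p: "i mod 2 < 3" "i mod 2 < 2" by auto
      have "D (g z) i = (Y z (i div 2) (i mod 2) - Y z (i div 2) 2) / S z"
        unfolding D_def ge[OF j p(1)] ge[OF j, of 2, simplified] by (simp add: diff_divide_distrib)
      also have "\<dots> = z i / S z" using p(2) by (simp add: Y_def)
      finally show ?thesis .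
    qed
    have "(N (g z))^2 = (\<Sum>i<2*m. (z i)^2) / (S z)^2"
      unfolding NN by (simp add: Dg power_divide sum_divide_distrib)
    also have "\<dots> = 1 / (S z)^2" using \<open>z\<in>Z\<close> by (simp add: Z_def)
    finally have "(N (g z))^2 = (1 / S z)^2" by (simp add: power_divide)
    moreover have "N (g z) \<ge> 0" unfolding N_def by (simp add: sum_nonneg)
    moreover have "1 / S z \<ge> 0" using S0 by simp
    ultimately have Ng: "N (g z) = 1 / S z" using power2_eq_iff_nonneg by blast
    show "f (g z) i = z i"
      using Dg[of i] Ng S0 \<open>z\<in>Z\<close> by (auto simp: f_def Z_def)
  qed
  define Xt where "Xt = subtopology (powertop_real UNIV) X"
  define Zt where "Zt = subtopology (powertop_real UNIV) Z"
  have tX: "topspace Xt = X" unfolding Xt_def by simp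
  have tZ: "topspace Zt = Z" unfolding Zt_def by simp
  have cD: "continuous_map Xt euclideanreal (\<lambda>x. D x i)" for i
    unfolding D_def Xt_def by (intro continuous_intros)
  have cN: "continuous_map Xt euclideanreal N"
    unfolding N_def[abs_def] by (intro continuous_intros cD) auto
  have cf: "continuous_map Xt Zt f"
    unfolding Zt_def continuous_map_in_subtopology
  proof
    show "continuous_map Xt (powertop_real UNIV) f"
      unfolding continuous_map_componentwise_UNIV
    proof
      fix i
      show "continuous_map Xt euclideanreal (\<lambda>x. f x i)"
      proof (cases "i < 2*m")
        case True
        then show ?thesis unfolding f_def
          by (simp, intro continuous_map_real_divide cD cN) (metis Npos tX less_irrefl)
      qed (simp add: f_def)
    qed
    show "f \<in> topspace Xt \<rightarrow> Z" using fZ tX by auto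
  qed
  have cY: "continuous_map Zt euclideanreal (\<lambda>z. Y z j p)" for j p
    by (cases "p < 2") (simp_all add: Y_def Zt_def sub_proj)
  have cMn: "continuous_map Zt euclideanreal (\<lambda>z. Mn z j)" for j
    unfolding Mn_def Zt_def by (intro continuous_intros)
  have cS: "continuous_map Zt euclideanreal S"
    unfolding S_def[abs_def] by (intro continuous_intros cY cMn) auto
  have cg: "continuous_map Zt Xt g"
    unfolding Xt_def continuous_map_in_subtopology
  proof
    show "continuous_map Zt (powertop_real UNIV) g"
      unfolding continuous_map_componentwise_UNIV
    proof
      fix a
      show "continuous_map Zt euclideanreal (\<lambda>z. g z a)"
      proof (cases "a \<in> I")
        case True
        then show ?thesis unfolding g_def
          by (simp, intro continuous_intros cY cMn cS) (metis Spos tZ less_irrefl)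
      qed (simp add: g_def)
    qed
    show "g \<in> topspace Zt \<rightarrow> X" using gX tZ by auto
  qed
  have "homeomorphic_maps Xt Zt f g"
    unfolding homeomorphic_maps_def using cf cg gf fg tX tZ by auto
  hence "Xt homeomorphic_space Zt" by (rule homeomorphic_maps_imp_homeomorphic_space)
  thus ?thesis unfolding Xt_def Zt_def nsph X_def .
qed



context
  fixes V :: "'v set" and E :: "'v set set"
  assumes sg: "simple_graph V E" and md: "max_degree_le V E 3"
begin

definition "star v = {c \<in> claw_edges V E. Inl v \<in> c}"

lemma star_mem: "c \<in> star v \<longleftrightarrow> c \<in> claw_edges V E \<and> Inl v \<in> c"
  by (simp add: star_def)

lemma finV: "finite V" using sg by (simp add: simple_graph_def)

lemma finE: "finite E"
proof -
  have "E \<subseteq> Pow V" using sg by (auto simp: simple_graph_def)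
  thus ?thesis using finV by (meson finite_Pow_iff finite_subset)
qed

lemma edge_in: "e \<in> E \<Longrightarrow> u \<in> e \<Longrightarrow> u \<in> V"
  using sg by (auto simp: simple_graph_def)

lemma star_eq: "star v = (\<lambda>e. {Inl v, Inr (Inl e)}) ` {e\<in>E. v\<in>e}
     \<union> (if v \<in> V then (\<lambda>i. {Inl v, Inr (Inr (v, i))}) ` {..<3 - degree E v} else {})"
  unfolding star_def claw_edges_def by (auto simp: edge_in)

lemma finite_star: "finite (star v)"
  unfolding star_eq using finE by auto

lemma card_star: assumes "v \<in> V" shows "card (star v) = 3"
proof -
  have i1: "inj_on (\<lambda>e. {Inl v, Inr (Inl e)} :: 'v cvert set) {e\<in>E. v\<in>e}"
    by (auto simp: inj_on_def doubleton_eq_iff)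
  have i2: "inj_on (\<lambda>i. {Inl v, Inr (Inr (v, i))} :: 'v cvert set) {..<3 - degree E v}"
    by (auto simp: inj_on_def doubleton_eq_iff)
  have "card (star v) = card {e\<in>E. v\<in>e} + (3 - degree E v)"
    unfolding star_eq using assms finE
    by (subst card_Un_disjoint) (auto simp: card_image[OF i1] card_image[OF i2])
  moreover have "degree E v \<le> 3" using md assms by (simp add: max_degree_le_def)
  ultimately show ?thesis by (simp add: degree_def)
qed

lemma owner: "c \<in> claw_edges V E \<Longrightarrow> \<exists>v\<in>V. c \<in> star v"
  unfolding star_def claw_edges_def by (auto simp: edge_in)

lemma owner_unique: "c \<in> claw_edges V E \<Longrightarrow> Inl v \<in> c \<Longrightarrow> Inl w \<in> c \<Longrightarrow> v = w"
  unfolding claw_edges_def by auto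

lemma finF: "finite (claw_edges V E)"
proof -
  have "claw_edges V E = (\<Union>v\<in>V. star v)" using owner by (auto simp: star_def)
  thus ?thesis using finV finite_star by simp
qed

lemma deg_other_le2: "card {c \<in> M. Inr y \<in> c} \<le> 2" if "M \<subseteq> claw_edges V E" for M and y :: "'v set + 'v \<times> nat"
proof (cases y)
  case (Inl e)
  show ?thesis
  proof (cases "e \<in> E")
    case True
    then obtain a b where ab: "e = {a, b}" using sg by (auto simp: simple_graph_def)
    have "{c \<in> M. Inr y \<in> c} \<subseteq> {{Inl a, Inr y}, {Inl b, Inr y}}"
      using that Inl ab unfolding claw_edges_def by auto
    hence "card {c \<in> M. Inr y \<in> c} \<le> card {{Inl a, Inr y}, {Inl b, Inr y}}"
      by (intro card_mono) auto
    also have "\<dots> \<le> 2" by (simp add: card_insert_if)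
    finally show ?thesis .
  next
    case False
    have "{c \<in> M. Inr y \<in> c} = {}"
      using that Inl False unfolding claw_edges_def by auto
    thus ?thesis by (metis card.empty zero_le)
  qed
next
  case (Inr wi)
  obtain w i where wi: "wi = (w, i)" by fastforce
  have "{c \<in> M. Inr y \<in> c} \<subseteq> {{Inl w, Inr y}}"
    using that Inr wi unfolding claw_edges_def by auto
  hence "card {c \<in> M. Inr y \<in> c} \<le> card {{Inl w, Inr y}}"
    by (intro card_mono) auto
  thus ?thesis by simp
qed

lemma tm_iff: "two_matching (claw_edges V E) M \<longleftrightarrow> M \<subseteq> claw_edges V E \<and> (\<forall>v\<in>V. \<not> star v \<subseteq> M)"
proof (cases "M \<subseteq> claw_edges V E")
  case True
  have "(\<forall>x. card {c \<in> M. x \<in> c} \<le> 2) \<longleftrightarrow> (\<forall>v. card {c \<in> M. Inl v \<in> c} \<le> 2)"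
  proof (intro iffI allI)
    fix x assume H: "\<forall>v. card {c \<in> M. Inl v \<in> c} \<le> 2"
    show "card {c \<in> M. x \<in> c} \<le> 2"
      by (cases x) (use H deg_other_le2[OF True] in auto)
  qed auto
  also have "\<dots> \<longleftrightarrow> (\<forall>v\<in>V. \<not> star v \<subseteq> M)"
  proof -
    have eq: "{c \<in> M. Inl v \<in> c} = star v \<inter> M" for v using True by (auto simp: star_def)
    have "card (star v \<inter> M) \<le> 2 \<longleftrightarrow> \<not> star v \<subseteq> M" if "v \<in> V" for v
    proof
      assume c2: "card (star v \<inter> M) \<le> 2" show "\<not> star v \<subseteq> M"
      proof
        assume "star v \<subseteq> M" hence "star v \<inter> M = star v" by blast
        thus False using c2 card_star[OF that] by simp
      qed
    next
      assume "\<not> star v \<subseteq> M"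
      hence "star v \<inter> M \<subset> star v" by blast
      hence "card (star v \<inter> M) < card (star v)" by (rule psubset_card_mono[OF finite_star])
      thus "card (star v \<inter> M) \<le> 2" using card_star[OF that] by simp
    qed
    moreover have "star v = {}" if "v \<notin> V" for v
      using owner owner_unique that unfolding star_def by blast
    ultimately show ?thesis unfolding eq by force
  qed
  finally show ?thesis using True by (simp add: two_matching_def)
qed (simp add: two_matching_def)

lemma real_eq:
  assumes bvv: "bij_betw vv {..<m} V" and bhh: "\<forall>v\<in>V. bij_betw (hh v) {..<3::nat} (star v)"
  shows "realization_set (two_matching_complex (claw_edges V E)) =
    {x. (\<forall>i. 0 \<le> x i) \<and> (\<forall>i. i \<notin> claw_edges V E \<longrightarrow> x i = 0) \<and> sum x (claw_edges V E) = 1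
        \<and> (\<forall>j<m. \<exists>p<3. x (hh (vv j) p) = 0)}" (is "?L = ?R")
proof
  show "?L \<subseteq> ?R"
  proof
    fix x assume "x \<in> ?L"
    then obtain \<sigma> where tm: "two_matching (claw_edges V E) \<sigma>" and x0: "\<forall>i. 0 \<le> x i"
      and xs: "\<forall>i. i \<notin> \<sigma> \<longrightarrow> x i = 0" and s1: "sum x \<sigma> = 1"
      unfolding realization_set_def two_matching_complex_def by auto
    have sub: "\<sigma> \<subseteq> claw_edges V E" and nst: "\<forall>v\<in>V. \<not> star v \<subseteq> \<sigma>" using tm tm_iff by auto
    have "sum x (claw_edges V E) = sum x \<sigma>"
      by (rule sum.mono_neutral_right[OF finF sub]) (use xs in auto)
    moreover have "\<exists>p<3. x (hh (vv j) p) = 0" if "j < m" for j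
    proof -
      have v: "vv j \<in> V" using bvv that by (auto simp: bij_betw_def)
      then obtain c where "c \<in> star (vv j)" "c \<notin> \<sigma>" using nst by auto
      moreover have "star (vv j) = hh (vv j) ` {..<3}" using bhh v by (auto simp: bij_betw_def)
      ultimately show ?thesis using xs by auto
    qed
    moreover have "\<forall>i. i \<notin> claw_edges V E \<longrightarrow> x i = 0" using xs sub by auto
    ultimately show "x \<in> ?R" using x0 s1 by auto
  qed
next
  show "?R \<subseteq> ?L"
  proof
    fix x assume xR: "x \<in> ?R"
    define \<sigma> where "\<sigma> = {i \<in> claw_edges V E. x i \<noteq> 0}"
    have sub: "\<sigma> \<subseteq> claw_edges V E" by (auto simp: \<sigma>_def)
    have "\<not> star v \<subseteq> \<sigma>" if vV: "v \<in> V" for v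
    proof -
      obtain j where j: "j < m" "vv j = v" using bvv vV by (auto simp: bij_betw_def)
      then obtain p where p: "p < 3" "x (hh v p) = 0" using xR by auto
      have "hh v p \<in> star v" using bhh vV p by (auto simp: bij_betw_def)
      thus ?thesis using p unfolding \<sigma>_def by auto
    qed
    hence tm: "\<sigma> \<in> two_matching_complex (claw_edges V E)"
      unfolding two_matching_complex_def using tm_iff sub by auto
    have xs: "\<forall>i. i \<notin> \<sigma> \<longrightarrow> x i = 0" using xR unfolding \<sigma>_def by auto
    have "sum x (claw_edges V E) = sum x \<sigma>"
      by (rule sum.mono_neutral_right[OF finF sub]) (use xs in auto)
    hence "sum x \<sigma> = 1" using xR by auto
    thus "x \<in> ?L" unfolding realization_set_def using tm xs xR by blast
  qed
qed

end

theorem mainTheorem4: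
  fixes V :: "'v set" and E :: "'v set set"
  assumes "simple_graph V E" and "V \<noteq> {}" and "max_degree_le V E 3"
  shows "\<exists>k::nat. 3 * (k + 1) = 2 * card (claw_edges V E)
           \<and> realization (two_matching_complex (claw_edges V E)) homotopy_equivalent_space nsphere k"
proof -
  note sg = assms(1) and md = assms(3)
  define F where "F = claw_edges V E"
  define m where "m = card V"
  have fV: "finite V" using finV[OF sg md] .
  have m1: "m \<ge> 1" using fV assms(2) unfolding m_def by (simp add: Suc_le_eq card_gt_0_iff)
  obtain vv where bvv: "bij_betw vv {..<m} V"
    using ex_bij_betw_nat_finite[OF fV] unfolding m_def atLeast0LessThan by blast
  have "\<forall>v\<in>V. \<exists>h. bij_betw h {..<3::nat} (star V E v)"
  proof
    fix v assume "v \<in> V"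
    thus "\<exists>h. bij_betw h {..<3::nat} (star V E v)"
      using ex_bij_betw_nat_finite[OF finite_star[OF sg md, of v]] card_star[OF sg md, of v]
      unfolding atLeast0LessThan by metis
  qed
  then obtain hh where bhh: "\<forall>v\<in>V. bij_betw (hh v) {..<3::nat} (star V E v)"
    by metis
  define ee where "ee j p = hh (vv j) p" for j p
  define Dm where "Dm = {..<m} \<times> {..<3::nat}"
  define phi where "phi = (\<lambda>(j,p). ee j p)"
  have vvin: "vv j \<in> V" if "j < m" for j using bvv that by (auto simp: bij_betw_def)
  have hhin: "hh v p \<in> star V E v" if "v \<in> V" "p < 3" for v p
    using bhh that by (auto simp: bij_betw_def)
  have inj: "inj_on phi Dm"
  proof (rule inj_onI)
    fix a b assume a: "a \<in> Dm" and b: "b \<in> Dm" and eq: "phi a = phi b"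
    obtain j p where jp: "a = (j,p)" "j < m" "p < 3" using a by (auto simp: Dm_def)
    obtain j' p' where jp': "b = (j',p')" "j' < m" "p' < 3" using b by (auto simp: Dm_def)
    have c1: "hh (vv j) p \<in> star V E (vv j)" using hhin vvin jp by auto
    have c2: "hh (vv j') p' \<in> star V E (vv j')" using hhin vvin jp' by auto
    have e: "hh (vv j) p = hh (vv j') p'" using eq jp jp' by (simp add: phi_def ee_def)
    have "vv j = vv j'"
    proof -
      have "hh (vv j) p \<in> F" "Inl (vv j) \<in> hh (vv j) p" "Inl (vv j') \<in> hh (vv j) p"
        using c1 c2 e by (simp_all add: star_mem[OF sg md] F_def)
      thus ?thesis using owner_unique[OF sg md] unfolding F_def by blast
    qed
    hence "j = j'" using bvv jp jp' by (auto simp: bij_betw_def inj_on_def)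
    moreover have "p = p'" using e \<open>j = j'\<close> bhh vvin[OF jp(2)] jp jp'
      by (auto simp: bij_betw_def inj_on_def)
    ultimately show "a = b" using jp jp' by simp
  qed
  have img: "phi ` Dm = F"
  proof
    show "phi ` Dm \<subseteq> F"
      using hhin vvin by (auto simp: phi_def ee_def Dm_def F_def star_mem[OF sg md])
    show "F \<subseteq> phi ` Dm"
    proof
      fix c assume "c \<in> F"
      then obtain v where v: "v \<in> V" "c \<in> star V E v" using owner[OF sg md] F_def by blast
      obtain j where j: "j < m" "vv j = v" using bvv v by (auto simp: bij_betw_def)
      have "c \<in> hh v ` {..<3}" using bhh v by (auto simp: bij_betw_def)
      then obtain p where p: "p < 3" "hh v p = c" by auto
      show "c \<in> phi ` Dm" using j p by (auto simp: phi_def ee_def Dm_def intro!: image_eqI[of _ _ "(j,p)"])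
    qed
  qed
  define blk where "blk a = fst (inv_into Dm phi a)" for a
  define pos where "pos a = snd (inv_into Dm phi a)" for a
  have inI: "blk a < m \<and> pos a < 3 \<and> ee (blk a) (pos a) = a" if "a \<in> F" for a
  proof -
    have "inv_into Dm phi a \<in> Dm" using that img by (metis inv_into_into)
    moreover have "phi (inv_into Dm phi a) = a" using that img by (metis f_inv_into_f)
    ultimately show ?thesis unfolding blk_def pos_def Dm_def phi_def
      by (cases "inv_into Dm phi a") auto
  qed
  have inB: "ee j p \<in> F \<and> blk (ee j p) = j \<and> pos (ee j p) = p" if "j < m" "p < 3" for j p
  proof -
    have d: "(j,p) \<in> Dm" using that by (simp add: Dm_def)
    have "inv_into Dm phi (phi (j,p)) = (j,p)" by (rule inv_into_f_f[OF inj d])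
    moreover have "phi (j,p) \<in> F" using img d by blast
    ultimately show ?thesis by (simp add: blk_def pos_def phi_def)
  qed
  have hs: "subtopology (powertop_real UNIV)
     {x. (\<forall>i. 0 \<le> x i) \<and> (\<forall>i. i \<notin> F \<longrightarrow> x i = 0) \<and> sum x F = 1 \<and> (\<forall>j<m. \<exists>p<3. x (ee j p) = 0)}
     homeomorphic_space nsphere (2*m-1)"
    by (rule block_sphere[OF m1 inI inB])
  have "realization (two_matching_complex F) homeomorphic_space nsphere (2*m-1)"
    using hs unfolding realization_def F_def real_eq[OF sg md bvv bhh] ee_def .
  hence "realization (two_matching_complex F) homotopy_equivalent_space nsphere (2*m-1)"
    by (rule homeomorphic_imp_homotopy_equivalent_space)
  moreover have "card F = 3 * m"
  proof -
    have "card F = card Dm" using bij_betw_same_card[of phi Dm F] inj img by (simp add: bij_betw_def)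
    thus ?thesis by (simp add: Dm_def)
  qed
  ultimately show ?thesis using m1 unfolding F_def
    by (intro exI[of _ "2*m-1"]) auto
qed

end
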